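(* Under the positivity assumption, there exists a unique minimal stable variable set of $Y$, denoted $\boldsymbol{D}(Y)$. Moreover, the collection $\mathcal{L}(Y)$ of all stable variable sets of $Y$ under $P^{\text{tr}}$ satisfies $$\mathcal{L}(Y)=\{\boldsymbol{S}\subseteq\boldsymbol{X}\mid \boldsymbol{D}(Y)\subseteq\boldsymbol{S}\}.$$
   Context: $\boldsymbol{X}=(X_1,\dots,X_d)^T\in\mathbb{R}^d$ are features and $Y\in\mathbb{R}$ is an outcome with joint training distribution $P^{\text{tr}}(\boldsymbol{X},Y)$ (given by a density); $\mathcal{X}_j$ is the support of $X_j$, and $\mathbb{E}$ denotes expectation under $P^{\text{tr}}$. Positivity assumption: for all $x_1\in\mathcal{X}_1,\dots,x_d\in\mathcal{X}_d$, $P^{\text{tr}}(X_1=x_1,\dots,X_d=x_d)>0$. A subset $\boldsymbol{S}\subseteq\boldsymbol{X}$ is a stable variable set of $Y$ (under $P^{\text{tr}}$) if $\mathbb{E}[Y\mid\boldsymbol{S}]=\mathbb{E}[Y\mid\boldsymbol{X}]$. A minimal stable variable set is a stable variable set none of whose proper subsets is a stable variable set. *)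

theory Defs
  imports "HOL-Probability.Probability"
begin

text \<open>Features X_0,...,X_(d-1) are random variables X j :: 'a => real on the
probability space M (the training distribution), outcome Y :: 'a => real.
Sets of features are represented by sets of indices S \<subseteq> {..<d}.\<close>

definition feat_sigma :: "'a measure \<Rightarrow> (nat \<Rightarrow> 'a \<Rightarrow> real) \<Rightarrow> nat set \<Rightarrow> 'a measure" where
  "feat_sigma M X S = sigma (space M)
     {X j -` B \<inter> space M | j B. j \<in> S \<and> B \<in> sets borel}"

definition feat_vec :: "nat \<Rightarrow> (nat \<Rightarrow> 'a \<Rightarrow> real) \<Rightarrow> 'a \<Rightarrow> (nat \<Rightarrow> real)" where
  "feat_vec d X \<omega> = restrict (\<lambda>j. X j \<omega>) {..<d}"

definition rv_support :: "'a measure \<Rightarrow> ('a \<Rightarrow> real) \<Rightarrow> real set" where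
  "rv_support M Z = {x. \<forall>e>0. 0 < measure M {\<omega> \<in> space M. Z \<omega> \<in> ball x e}}"

definition stable_set :: "'a measure \<Rightarrow> nat \<Rightarrow> (nat \<Rightarrow> 'a \<Rightarrow> real) \<Rightarrow> ('a \<Rightarrow> real) \<Rightarrow> nat set \<Rightarrow> bool" where
  "stable_set M d X Y S \<longleftrightarrow> S \<subseteq> {..<d} \<and>
     (AE \<omega> in M. real_cond_exp M (feat_sigma M X S) Y \<omega> =
                  real_cond_exp M (feat_sigma M X {..<d}) Y \<omega>)"

definition minimal_stable_set :: "'a measure \<Rightarrow> nat \<Rightarrow> (nat \<Rightarrow> 'a \<Rightarrow> real) \<Rightarrow> ('a \<Rightarrow> real) \<Rightarrow> nat set \<Rightarrow> bool" where
  "minimal_stable_set M d X Y S \<longleftrightarrow> stable_set M d X Y S \<and>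
     (\<forall>T. T \<subset> S \<longrightarrow> \<not> stable_set M d X Y T)"

end

theory Submission
  imports Defs
begin

definition fgen :: "'a measure \<Rightarrow> (nat \<Rightarrow> 'a \<Rightarrow> real) \<Rightarrow> nat set \<Rightarrow> 'a set set" where
  "fgen M X S = {X j -` B \<inter> space M | j B. j \<in> S \<and> B \<in> sets borel}"

lemma fgen_Pow: "fgen M X S \<subseteq> Pow (space M)"
  unfolding fgen_def by auto

lemma fs_space[simp]: "space (feat_sigma M X S) = space M"
  unfolding feat_sigma_def by (simp add: space_measure_of_conv)

lemma fs_sets: "sets (feat_sigma M X S) = sigma_sets (space M) (fgen M X S)"
  unfolding feat_sigma_def fgen_def[symmetric] by (rule sets_measure_of[OF fgen_Pow])

lemma fs_sub:
  assumes "\<And>j. j \<in> S \<Longrightarrow> X j \<in> borel_measurable M"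
  shows "subalgebra M (feat_sigma M X S)"
  unfolding subalgebra_def
proof
  show "space (feat_sigma M X S) = space M" by simp
  have "fgen M X S \<subseteq> sets M"
    unfolding fgen_def using assms measurable_sets by blast
  then show "sets (feat_sigma M X S) \<subseteq> sets M"
    unfolding fs_sets by (rule sets.sigma_sets_subset)
qed

lemma fs_mono:
  assumes "S \<subseteq> T"
  shows "subalgebra (feat_sigma M X T) (feat_sigma M X S)"
  unfolding subalgebra_def fs_sets
proof
  show "space (feat_sigma M X S) = space (feat_sigma M X T)" by simp
  have "fgen M X S \<subseteq> fgen M X T" using assms unfolding fgen_def by blast
  then show "sigma_sets (space M) (fgen M X S) \<subseteq> sigma_sets (space M) (fgen M X T)"
    by (rule sigma_sets_mono')
qed

lemma fs_meas:
  assumes "j \<in> S"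
  shows "X j \<in> borel_measurable (feat_sigma M X S)"
proof (rule measurableI)
  fix x assume "x \<in> space (feat_sigma M X S)" then show "X j x \<in> space borel" by simp
next
  fix A :: "real set" assume "A \<in> sets borel"
  then have "X j -` A \<inter> space M \<in> fgen M X S" unfolding fgen_def using assms by blast
  then show "X j -` A \<inter> space (feat_sigma M X S) \<in> sets (feat_sigma M X S)"
    unfolding fs_sets by auto
qed

lemma prob_sub:
  assumes "prob_space M" "subalgebra M F"
  shows "sigma_finite_subalgebra M F"
proof -
  interpret prob_space M by fact
  interpret finite_measure_subalgebra M F
    by unfold_locales (rule assms(2))
  show ?thesis by (rule sigma_finite_subalgebra_axioms)
qed

lemma stable_up:
  assumes P: "prob_space M" and Xm: "\<And>j. j < d \<Longrightarrow> X j \<in> borel_measurable M"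
    and Yi: "integrable M Y"
    and st: "stable_set M d X Y D" and DS: "D \<subseteq> S" and Sd: "S \<subseteq> {..<d}"
  shows "stable_set M d X Y S"
proof -
  have Dd: "D \<subseteq> {..<d}" using DS Sd by auto
  have subS: "subalgebra M (feat_sigma M X S)" using Sd Xm by (intro fs_sub) auto
  have subD: "subalgebra M (feat_sigma M X D)" using Dd Xm by (intro fs_sub) auto
  have subA: "subalgebra M (feat_sigma M X {..<d})" using Xm by (intro fs_sub) auto
  have subSD: "subalgebra (feat_sigma M X S) (feat_sigma M X D)" using DS by (rule fs_mono)
  have subAS: "subalgebra (feat_sigma M X {..<d}) (feat_sigma M X S)" using Sd by (rule fs_mono)
  interpret S: sigma_finite_subalgebra M "feat_sigma M X S" using P subS by (rule prob_sub)
  interpret D: sigma_finite_subalgebra M "feat_sigma M X D" using P subD by (rule prob_sub)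
  interpret A: sigma_finite_subalgebra M "feat_sigma M X {..<d}" using P subA by (rule prob_sub)
  let ?f = "real_cond_exp M (feat_sigma M X {..<d}) Y"
  let ?gD = "real_cond_exp M (feat_sigma M X D) Y"
  let ?gS = "real_cond_exp M (feat_sigma M X S) Y"
  have e1: "AE x in M. ?gD x = ?f x" using st unfolding stable_set_def by auto
  have e2: "AE x in M. real_cond_exp M (feat_sigma M X S) ?f x = ?gS x"
    by (rule S.real_cond_exp_nested_subalg[OF subA subAS Yi])
  have e3: "AE x in M. real_cond_exp M (feat_sigma M X S) ?f x = real_cond_exp M (feat_sigma M X S) ?gD x"
    by (rule S.real_cond_exp_cong) (use e1 in auto)
  have mD: "?gD \<in> borel_measurable (feat_sigma M X S)"
    by (rule measurable_from_subalg[OF subSD]) simp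
  have e4: "AE x in M. real_cond_exp M (feat_sigma M X S) ?gD x = ?gD x"
    by (rule S.real_cond_exp_F_meas[OF D.real_cond_exp_int(1)[OF Yi] mD])
  show ?thesis unfolding stable_set_def using Sd e1 e2 e3 e4 by auto
qed

lemma preimg_sigma_sub:
  assumes sF: "subalgebra M F" and f: "(f::'a \<Rightarrow> real) \<in> borel_measurable F"
  shows "sigma_sets (space M) {f -` A \<inter> space M |A. A \<in> sets borel} \<subseteq> sets F"
proof -
  have sp: "space F = space M" using sF unfolding subalgebra_def by simp
  have "{f -` A \<inter> space M |A. A \<in> sets borel} \<subseteq> sets F"
  proof safe
    fix A :: "real set" assume "A \<in> sets borel"
    from measurable_sets[OF f this] show "f -` A \<inter> space M \<in> sets F" by (simp add: sp)
  qed
  from sets.sigma_sets_subset[OF this] show ?thesis by (simp add: sp)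
qed

lemma indep_integral:
  assumes P: "prob_space M" and sF: "subalgebra M F" and sG: "subalgebra M G"
    and ind: "prob_space.indep_set M (sets F) (sets G)"
    and f: "f \<in> borel_measurable F" and g: "g \<in> borel_measurable G"
    and fi: "integrable M f" and gi: "integrable M (g::'a \<Rightarrow> real)"
  shows "(\<integral>x. f x * g x \<partial>M) = (\<integral>x. f x \<partial>M) * (\<integral>x. g x \<partial>M)"
proof -
  interpret prob_space M by fact
  have fM: "f \<in> borel_measurable M" by (rule measurable_from_subalg[OF sF f])
  have gM: "g \<in> borel_measurable M" by (rule measurable_from_subalg[OF sG g])
  note s1 = preimg_sigma_sub[OF sF f] and s2 = preimg_sigma_sub[OF sG g]
  have "indep_set (sigma_sets (space M) {f -` A \<inter> space M |A. A \<in> sets borel})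
                  (sigma_sets (space M) {g -` A \<inter> space M |A. A \<in> sets borel})"
    using ind unfolding indep_set_def
    by (rule indep_sets_mono_sets) (use s1 s2 in \<open>auto split: bool.split\<close>)
  then have "indep_var borel f borel g"
    unfolding indep_var_eq using fM gM by auto
  then show ?thesis using indep_var_lebesgue_integral fi gi by blast
qed

lemma cond_exp_indep:
  assumes P: "prob_space M"
    and sS: "subalgebra M FS" and sC: "subalgebra M FC" and sA: "subalgebra M FA"
    and sT: "subalgebra M FT" and SA: "subalgebra FS FA"
    and ind: "prob_space.indep_set M (sets FS) (sets FC)"
    and FT: "sets FT = sigma_sets (space M) {a \<inter> c | a c. a \<in> sets FA \<and> c \<in> sets FC}"
    and u: "u \<in> borel_measurable FS" and ui: "integrable M u"
  shows "AE x in M. real_cond_exp M FT u x = real_cond_exp M FA u x"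
proof -
  interpret prob_space M by fact
  interpret T: sigma_finite_subalgebra M FT using P sT by (rule prob_sub)
  interpret A: sigma_finite_subalgebra M FA using P sA by (rule prob_sub)
  let ?k = "real_cond_exp M FA u"
  let ?E = "{a \<inter> c | a c. a \<in> sets FA \<and> c \<in> sets FC}"
  have ki: "integrable M ?k" by (rule A.real_cond_exp_int(1)[OF ui])
  have kA: "?k \<in> borel_measurable FA" by simp
  have kS: "?k \<in> borel_measurable FS" by (rule measurable_from_subalg[OF SA kA])
  have uM: "u \<in> borel_measurable M" by (rule measurable_from_subalg[OF sS u])
  have spA: "space FA = space M" "space FC = space M" "space FS = space M" "space FT = space M"
    using sA sC sS sT unfolding subalgebra_def by auto
  have setsA: "sets FA \<subseteq> sets M" "sets FC \<subseteq> sets M" "sets FT \<subseteq> sets M"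
    using sA sC sT unfolding subalgebra_def by auto
  have AT: "subalgebra FT FA"
    unfolding subalgebra_def
  proof
    show "space FA = space FT" using spA by simp
    show "sets FA \<subseteq> sets FT"
    proof
      fix a assume a: "a \<in> sets FA"
      have "space M \<in> sets FC" using sets.top[of FC] spA by simp
      moreover have "a = a \<inter> space M" using sets.sets_into_space[OF a] spA by auto
      ultimately have "a \<in> ?E" using a by blast
      then show "a \<in> sets FT" unfolding FT by auto
    qed
  qed
  have kT: "?k \<in> borel_measurable FT" by (rule measurable_from_subalg[OF AT kA])
  have key: "(\<integral>x\<in>U. u x \<partial>M) = (\<integral>x\<in>U. ?k x \<partial>M)" if U: "U \<in> sets FT" for U
  proof -
    have Istab: "Int_stable ?E"
    proof (rule Int_stableI)
      fix x y assume "x \<in> ?E" "y \<in> ?E"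
      then obtain a1 c1 a2 c2 where "x = a1 \<inter> c1" "y = a2 \<inter> c2" "a1 \<in> sets FA" "a2 \<in> sets FA"
        "c1 \<in> sets FC" "c2 \<in> sets FC" by blast
      then show "x \<inter> y \<in> ?E"
        by (intro CollectI exI[of _ "a1 \<inter> a2"] exI[of _ "c1 \<inter> c2"]) auto
    qed
    have EPow: "?E \<subseteq> Pow (space M)"
      using sets.sets_into_space[of _ FA] spA by auto
    have U': "U \<in> sigma_sets (space M) ?E" using U FT by simp
    show ?thesis
      using Istab EPow U'
    proof (induction rule: sigma_sets_induct_disjoint)
      case (basic U)
      then obtain a c where U: "U = a \<inter> c" and a: "a \<in> sets FA" and c: "c \<in> sets FC" by blast
      have aS: "a \<in> sets FS" using a SA unfolding subalgebra_def by auto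
      have aM: "a \<in> sets M" using a setsA by auto
      have cM: "c \<in> sets M" using c setsA by auto
      have ia: "indicator a \<in> borel_measurable FS" using aS by simp
      have ic: "indicator c \<in> borel_measurable FC" using c by simp
      have icI: "integrable M (indicator c :: 'a \<Rightarrow> real)" using cM by (intro integrable_real_indicator) (auto simp: less_top[symmetric])
      have h1: "(\<integral>x. (indicator a x * u x) * indicator c x \<partial>M) =
                (\<integral>x. indicator a x * u x \<partial>M) * (\<integral>x. indicator c x \<partial>M)"
        by (rule indep_integral[OF P sS sC ind _ ic _ icI])
           (use ia u integrable_mult_indicator[OF aM ui] in \<open>auto intro!: borel_measurable_times\<close>)
      have h2: "(\<integral>x. (indicator a x * ?k x) * indicator c x \<partial>M) =
                (\<integral>x. indicator a x * ?k x \<partial>M) * (\<integral>x. indicator c x \<partial>M)"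
        by (rule indep_integral[OF P sS sC ind _ ic _ icI])
           (use ia kS integrable_mult_indicator[OF aM ki] in \<open>auto intro!: borel_measurable_times\<close>)
      have h3: "(\<integral>x. indicator a x * u x \<partial>M) = (\<integral>x. indicator a x * ?k x \<partial>M)"
        using A.real_cond_exp_intA[OF ui a] unfolding set_lebesgue_integral_def by simp
      have "(\<integral>x\<in>U. u x \<partial>M) = (\<integral>x. (indicator a x * u x) * indicator c x \<partial>M)"
        unfolding set_lebesgue_integral_def U by (intro Bochner_Integration.integral_cong) (auto split: split_indicator)
      also have "\<dots> = (\<integral>x. (indicator a x * ?k x) * indicator c x \<partial>M)"
        using h1 h2 h3 by simp
      also have "\<dots> = (\<integral>x\<in>U. ?k x \<partial>M)"
        unfolding set_lebesgue_integral_def U by (intro Bochner_Integration.integral_cong) (auto split: split_indicator)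
      finally show ?case .
    next
      case empty
      then show ?case by (simp add: set_lebesgue_integral_def)
    next
      case (compl U)
      have UM: "U \<in> sets M" using compl(1) FT setsA by auto
      have c1: "(\<integral>x\<in>space M - U. f x \<partial>M) = (\<integral>x. f x \<partial>M) - (\<integral>x\<in>U. f x \<partial>M)"
        if fi: "integrable M (f::'a \<Rightarrow> real)" for f
      proof -
        have "(\<integral>x\<in>space M - U. f x \<partial>M) = (\<integral>x. f x - indicator U x * f x \<partial>M)"
          unfolding set_lebesgue_integral_def
          by (intro Bochner_Integration.integral_cong) (auto split: split_indicator)
        also have "\<dots> = (\<integral>x. f x \<partial>M) - (\<integral>x. indicator U x * f x \<partial>M)"
          using integrable_mult_indicator[OF UM fi]
          by (intro Bochner_Integration.integral_diff[OF fi]) simp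
        finally show ?thesis unfolding set_lebesgue_integral_def by simp
      qed
      show ?case using c1[OF ui] c1[OF ki] compl(2) A.real_cond_exp_int(2)[OF ui] by simp
    next
      case (union U)
      have UM: "\<And>i. U i \<in> sets M" using union(2) FT setsA by blast
      have disj: "\<And>i j. i \<noteq> j \<Longrightarrow> U i \<inter> U j = {}" using union(1) unfolding disjoint_family_on_def by auto
      have c2: "(\<integral>x\<in>(\<Union>i. U i). f x \<partial>M) = (\<Sum>i. (\<integral>x\<in>U i. f x \<partial>M))"
        if fi: "integrable M (f::'a \<Rightarrow> real)" for f
      proof (rule lebesgue_integral_countable_add[OF UM disj])
        have "(\<Union>i. U i) \<in> sets M" using UM by auto
        then show "set_integrable M (\<Union>i. U i) f"
          unfolding set_integrable_def using integrable_mult_indicator[OF _ fi] by simp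
      qed
      show ?case using c2[OF ui] c2[OF ki] union(3) by simp
    qed
  qed
  show ?thesis
    by (rule T.real_cond_exp_charact[OF key ui ki kT])
qed

lemma sigma_Int_stable:
  assumes "G \<subseteq> Pow \<Omega>"
  shows "Int_stable (sigma_sets \<Omega> G)"
proof -
  interpret sigma_algebra \<Omega> "sigma_sets \<Omega> G" by (rule sigma_algebra_sigma_sets[OF assms])
  show ?thesis by (auto intro!: Int_stableI)
qed

lemma fs_indep:
  assumes P: "prob_space M"
    and ind: "prob_space.indep_vars M (\<lambda>_. lborel) X {..<d}"
    and SC: "S \<union> C \<subseteq> {..<d}" "S \<inter> C = {}"
  shows "prob_space.indep_set M (sets (feat_sigma M X S)) (sets (feat_sigma M X C))"
proof -
  interpret prob_space M by fact
  define E where "E i = sigma_sets (space M) {X i -` A \<inter> space M | A. A \<in> sets (lborel::real measure)}" for i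
  define I where "I b = (if b then S else C)" for b
  have i1: "indep_sets E {..<d}" using ind unfolding indep_vars_def E_def by simp
  have i2: "indep_sets E (\<Union>j\<in>UNIV. I j)"
    by (rule indep_sets_mono_index[OF _ i1]) (use SC in \<open>auto simp: I_def\<close>)
  have i3: "indep_sets (\<lambda>j. sigma_sets (space M) (\<Union>i\<in>I j. E i)) UNIV"
  proof (rule indep_sets_collect_sigma[OF i2])
    fix i j assume "j \<in> (UNIV::bool set)" "i \<in> I j"
    show "Int_stable (E i)" unfolding E_def by (rule sigma_Int_stable) auto
  next
    show "disjoint_family_on I UNIV"
      using SC unfolding disjoint_family_on_def I_def by (auto split: if_splits)
  qed
  have eq: "sigma_sets (space M) (\<Union>i\<in>T. E i) = sets (feat_sigma M X T)" for T
    unfolding fs_sets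
  proof (rule sigma_sets_eqI)
    fix a assume "a \<in> (\<Union>i\<in>T. E i)"
    then obtain i where i: "i \<in> T" "a \<in> E i" by blast
    have "{X i -` A \<inter> space M | A. A \<in> sets (lborel::real measure)} \<subseteq> fgen M X T"
      using i unfolding fgen_def by auto
    then have "E i \<subseteq> sigma_sets (space M) (fgen M X T)"
      unfolding E_def by (rule sigma_sets_mono')
    then show "a \<in> sigma_sets (space M) (fgen M X T)" using i by blast
  next
    fix b assume "b \<in> fgen M X T"
    then obtain j B where b: "b = X j -` B \<inter> space M" "j \<in> T" "B \<in> sets borel"
      unfolding fgen_def by blast
    then have "b \<in> E j" unfolding E_def by auto
    then show "b \<in> sigma_sets (space M) (\<Union>i\<in>T. E i)" using b by blast
  qed
  have "(\<lambda>j. sigma_sets (space M) (\<Union>i\<in>I j. E i)) =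
        case_bool (sets (feat_sigma M X S)) (sets (feat_sigma M X C))"
    by (rule ext) (simp add: I_def eq split: bool.split)
  then show ?thesis using i3 unfolding indep_set_def by simp
qed

lemma rv_support_closed:
  assumes P: "prob_space M" and Z: "Z \<in> borel_measurable M"
  shows "closed (rv_support M Z)"
proof -
  interpret prob_space M by fact
  have "open (- rv_support M Z)"
    unfolding open_contains_ball
  proof
    fix x assume "x \<in> - rv_support M Z"
    then obtain e where e: "e > 0" "\<not> 0 < measure M {\<omega> \<in> space M. Z \<omega> \<in> ball x e}"
      unfolding rv_support_def by auto
    have m0: "measure M {\<omega> \<in> space M. Z \<omega> \<in> ball x e} = 0"
      using e(2) measure_nonneg[of M] by (meson antisym not_less)
    have "ball x e \<subseteq> - rv_support M Z"
    proof
      fix y assume y: "y \<in> ball x e"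
      define e' where "e' = e - dist x y"
      have e': "e' > 0" using y unfolding e'_def by (simp add: dist_commute)
      have sub: "ball y e' \<subseteq> ball x e"
      proof
        fix z assume "z \<in> ball y e'"
        then have "dist y z < e'" by simp
        moreover have "dist x z \<le> dist x y + dist y z" by (rule dist_triangle)
        ultimately show "z \<in> ball x e" unfolding e'_def by simp
      qed
      have meas: "{\<omega> \<in> space M. Z \<omega> \<in> ball x e} \<in> sets M"
        using measurable_sets[OF Z borel_open[OF open_ball]] by (simp add: Int_def conj_commute)
      have "measure M {\<omega> \<in> space M. Z \<omega> \<in> ball y e'} \<le> measure M {\<omega> \<in> space M. Z \<omega> \<in> ball x e}"
        by (rule finite_measure_mono[OF _ meas]) (use sub in auto)
      then have "\<not> 0 < measure M {\<omega> \<in> space M. Z \<omega> \<in> ball y e'}" using m0 by simp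
      then show "y \<in> - rv_support M Z" unfolding rv_support_def using e' by auto
    qed
    then show "\<exists>e>0. ball x e \<subseteq> - rv_support M Z" using e(1) by blast
  qed
  then show ?thesis by (simp add: closed_def)
qed

lemma rv_support_AE:
  assumes P: "prob_space M" and Z: "Z \<in> borel_measurable M"
  shows "AE \<omega> in M. Z \<omega> \<in> rv_support M Z"
proof -
  interpret prob_space M by fact
  define F where "F = {ball x e | x e. e > 0 \<and> measure M {\<omega> \<in> space M. Z \<omega> \<in> ball x e} = 0}"
  obtain F' where F': "F' \<subseteq> F" "countable F'" "\<Union>F' = \<Union>F"
    using Lindelof[of F] unfolding F_def by auto
  define N where "N = (\<Union>b\<in>F'. Z -` b \<inter> space M)"
  have bnull: "Z -` b \<inter> space M \<in> null_sets M" if "b \<in> F" for b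
  proof -
    from that obtain x e where b: "b = ball x e" "measure M {\<omega> \<in> space M. Z \<omega> \<in> ball x e} = 0"
      unfolding F_def by blast
    have eq: "Z -` b \<inter> space M = {\<omega> \<in> space M. Z \<omega> \<in> ball x e}" using b by auto
    have meas: "{\<omega> \<in> space M. Z \<omega> \<in> ball x e} \<in> sets M"
      using measurable_sets[OF Z borel_open[OF open_ball]] by (simp add: Int_def conj_commute)
    show ?thesis unfolding eq using b(2) meas by (simp add: emeasure_eq_measure null_sets_def)
  qed
  have N: "N \<in> null_sets M" unfolding N_def
    by (rule null_sets_UN'[OF F'(2)]) (use F'(1) bnull in blast)
  show ?thesis
  proof (rule AE_I'[OF N])
    show "{\<omega> \<in> space M. Z \<omega> \<notin> rv_support M Z} \<subseteq> N"
    proof safe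
      fix \<omega> assume \<omega>: "\<omega> \<in> space M" "Z \<omega> \<notin> rv_support M Z"
      then obtain e where e: "e > 0" "\<not> 0 < measure M {\<omega>' \<in> space M. Z \<omega>' \<in> ball (Z \<omega>) e}"
        unfolding rv_support_def by auto
      have "measure M {\<omega>' \<in> space M. Z \<omega>' \<in> ball (Z \<omega>) e} = 0"
        using e(2) measure_nonneg[of M] by (meson antisym not_less)
      then have "ball (Z \<omega>) e \<in> F" unfolding F_def using e(1) by blast
      moreover have "Z \<omega> \<in> ball (Z \<omega>) e" using e(1) by simp
      ultimately have "Z \<omega> \<in> \<Union>F" by blast
      then obtain b where "b \<in> F'" "Z \<omega> \<in> b" using F'(3) by blast
      then show "\<omega> \<in> N" unfolding N_def using \<omega>(1) by blast
    qed
  qed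
qed


lemma change_measure:
  fixes M :: "'a measure" and X :: "nat \<Rightarrow> 'a \<Rightarrow> real" and p :: "(nat \<Rightarrow> real) \<Rightarrow> ennreal"
  assumes P: "prob_space M" and Xm: "\<And>j. j < d \<Longrightarrow> X j \<in> borel_measurable M"
    and Xd: "distributed M (PiM {..<d} (\<lambda>_. lborel)) (feat_vec d X) p"
    and pos: "\<forall>x \<in> (\<Pi>\<^sub>E j\<in>{..<d}. rv_support M (X j)). p x > 0"
    and d0: "d > 0"
  shows "\<exists>M'. prob_space M' \<and> sets M' = sets M \<and> space M' = space M \<and>
     (\<forall>P. (AE x in M. P x) \<longrightarrow> (AE x in M'. P x)) \<and> (\<forall>P. (AE x in M'. P x) \<longrightarrow> (AE x in M. P x)) \<and>
     prob_space.indep_vars M' (\<lambda>_. lborel) X {..<d}"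
proof -
  interpret prob_space M by fact
  define L where "L = PiM {..<d} (\<lambda>_. lborel::real measure)"
  define xv where "xv = feat_vec d X"
  define C where "C j = rv_support M (X j)" for j
  define K where "K = PiE {..<d} C"
  define \<phi> where "\<phi> = normal_density (0::real) (1::real)"
  define Z where "Z j = emeasure (density lborel (\<lambda>x. ennreal (\<phi> x))) (C j)" for j
  define c where "c j x = (if j < d then ennreal (\<phi> x) * indicator (C j) x / Z j else ennreal (\<phi> x))" for j x
  define \<mu> where "\<mu> j = density lborel (c j)" for j
  define n where "n x = (\<Prod>j<d. c j (x j))" for x
  define r where "r x = n x / p x" for x
  define M' where "M' = density M (\<lambda>\<omega>. r (xv \<omega>))"

  have xvm: "xv \<in> measurable M L" and pm: "p \<in> borel_measurable L" and dist: "distr M L xv = density L p"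
    using Xd unfolding distributed_def xv_def L_def by auto
  have Cb: "C j \<in> sets borel" if "j < d" for j
    unfolding C_def using rv_support_closed[OF P Xm[OF that]] by (rule borel_closed)
  have Cl: "C j \<in> sets lborel" if "j < d" for j using Cb[OF that] by simp
  have Ks: "K \<in> sets L" unfolding K_def L_def
    by (rule sets_PiM_I_finite) (auto intro: Cb)
  have AEK: "AE \<omega> in M. xv \<omega> \<in> K"
  proof -
    have "\<forall>j\<in>{..<d}. AE \<omega> in M. X j \<omega> \<in> C j"
      unfolding C_def using rv_support_AE[OF P Xm] by blast
    then have "AE \<omega> in M. \<forall>j\<in>{..<d}. X j \<omega> \<in> C j"
      by (rule eventually_ball_finite[rotated]) simp
    then show ?thesis by eventually_elim (simp add: xv_def feat_vec_def K_def restrict_PiE_iff)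
  qed
  have spL: "space L = PiE {..<d} (\<lambda>_. UNIV)" unfolding L_def by (simp add: space_PiM)
  have KL: "{x \<in> space L. x \<in> K} \<in> sets L"
  proof -
    have "{x \<in> space L. x \<in> K} = K" using sets.sets_into_space[OF Ks] by blast
    then show ?thesis using Ks by simp
  qed
  have AEKL: "AE x in density L p. x \<in> K"
    unfolding dist[symmetric] using AEK by (subst AE_distr_iff[OF xvm KL])
  have Pd: "prob_space (density L p)" unfolding dist[symmetric] by (rule prob_space_distr[OF xvm])
  have pfin: "AE x in L. p x \<noteq> \<infinity>"
  proof (rule nn_integral_PInf_AE[OF pm])
    have "integral\<^sup>N L p = emeasure (density L p) (space L)"
      using pm by (subst emeasure_density) (auto intro!: nn_integral_cong simp: indicator_def)
    also have "\<dots> = 1" using prob_space.emeasure_space_1[OF Pd] by simp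
    finally show "integral\<^sup>N L p \<noteq> \<infinity>" by simp
  qed
  have pfinM: "AE \<omega> in M. p (xv \<omega>) \<noteq> \<infinity>"
  proof -
    have "AE x in density L p. p x \<noteq> \<infinity>"
      unfolding AE_density[OF pm] using pfin by eventually_elim simp
    then have "AE x in distr M L xv. p x \<noteq> \<infinity>" unfolding dist .
    moreover have pms: "{x \<in> space L. p x \<noteq> \<infinity>} \<in> sets L" using pm by measurable
    ultimately show ?thesis using AE_distr_iff[OF xvm pms] by simp
  qed
  have \<phi>pos: "\<phi> x > 0" for x unfolding \<phi>_def by (rule normal_density_pos) simp
  have \<phi>m: "\<phi> \<in> borel_measurable borel" unfolding \<phi>_def by simp
  have P\<phi>: "prob_space (density lborel (\<lambda>x. ennreal (\<phi> x)))" unfolding \<phi>_def by (rule prob_space_normal_density) simp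
  have Zle: "Z j \<le> 1" for j unfolding Z_def by (rule prob_space.emeasure_le_1[OF P\<phi>])
  have Ztop: "Z j \<noteq> \<infinity>" for j
  proof
    assume "Z j = \<infinity>"
    then have "\<infinity> \<le> (1::ennreal)" using Zle[of j] by simp
    then show False using ennreal_one_less_top by (simp add: top_unique)
  qed
  have Zint: "Z j = (\<integral>\<^sup>+y. ennreal (\<phi> y) * indicator (C j) y \<partial>lborel)" if "j < d" for j
    unfolding Z_def using Cl[OF that] \<phi>m by (subst emeasure_density) auto
  have fm: "(\<lambda>y. ennreal (\<phi> y) * indicator (C j) y) \<in> borel_measurable borel" if "j < d" for j
  proof -
    note [measurable] = \<phi>m Cb[OF that]
    show ?thesis by simp
  qed
  interpret Lp: product_sigma_finite "\<lambda>_::nat. lborel::real measure"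
    by unfold_locales
  have prodZ: "(\<integral>\<^sup>+x. (\<Prod>j<d. ennreal (\<phi> (x j)) * indicator (C j) (x j)) \<partial>L) = (\<Prod>j<d. Z j)"
    unfolding L_def by (subst Lp.product_nn_integral_prod) (auto simp: Zint fm)
  have Zne: "Z j \<noteq> 0" if "j < d" for j
  proof -
    have "(\<Prod>j<d. Z j) \<noteq> 0"
    proof
      assume "(\<Prod>j<d. Z j) = 0"
      then have i0: "(\<integral>\<^sup>+x. (\<Prod>j<d. ennreal (\<phi> (x j)) * indicator (C j) (x j)) \<partial>L) = 0" using prodZ by simp
      have pm': "(\<lambda>x. \<Prod>j<d. ennreal (\<phi> (x j)) * indicator (C j) (x j)) \<in> borel_measurable L"
        unfolding L_def
      proof (intro borel_measurable_prod_ennreal)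
        fix j assume j: "j \<in> {..<d}"
        have jd: "j < d" using j by simp
        have fl: "(\<lambda>y. ennreal (\<phi> y) * indicator (C j) y) \<in> borel_measurable lborel" using fm[OF jd] by simp
        show "(\<lambda>x. ennreal (\<phi> (x j)) * indicator (C j) (x j)) \<in> borel_measurable (PiM {..<d} (\<lambda>_. lborel))"
          using measurable_compose[OF measurable_component_singleton[OF j] fl] by simp
      qed
      have "AE x in L. (\<Prod>j<d. ennreal (\<phi> (x j)) * indicator (C j) (x j)) = 0"
        using i0 nn_integral_0_iff_AE[OF pm'] by simp
      then have "AE x in L. x \<notin> K"
      proof eventually_elim
        case (elim x)
        show "x \<notin> K"
        proof
          assume "x \<in> K"
          then have "\<forall>j<d. x j \<in> C j" unfolding K_def by auto
          then have "\<forall>j<d. ennreal (\<phi> (x j)) * indicator (C j) (x j) \<noteq> 0"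
            using \<phi>pos by (simp add: ennreal_eq_0_iff not_le)
          then show False using elim by simp
        qed
      qed
      then have "AE x in density L p. x \<notin> K" unfolding AE_density[OF pm] by eventually_elim simp
      with AEKL have "AE x in density L p. False" by eventually_elim simp
      then show False using prob_space.AE_False[OF Pd] by simp
    qed
    then show ?thesis using that by simp
  qed
  have cm: "c j \<in> borel_measurable borel" for j
  proof (cases "j < d")
    case True
    note [measurable] = \<phi>m Cb[OF True]
    show ?thesis unfolding c_def using True by simp
  next
    case False
    note [measurable] = \<phi>m
    show ?thesis unfolding c_def using False by simp
  qed
  have cml: "c j \<in> borel_measurable lborel" for j using cm[of j] by simp
  have \<mu>prob: "prob_space (\<mu> j)" for j
  proof (cases "j < d")
    case True
    have "emeasure (\<mu> j) (space (\<mu> j)) = (\<integral>\<^sup>+x. c j x \<partial>lborel)"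
      unfolding \<mu>_def using cml[of j] by (subst emeasure_density) auto
    also have "\<dots> = (\<integral>\<^sup>+x. ennreal (\<phi> x) * indicator (C j) x \<partial>lborel) / Z j"
      unfolding c_def using True fm[OF True] by (simp add: nn_integral_divide)
    also have "\<dots> = 1" using Zint[OF True] Zne[OF True] Ztop[of j] by (simp add: less_top)
    finally show ?thesis by (rule prob_spaceI)
  next
    case False
    then have "\<mu> j = density lborel (\<lambda>x. ennreal (\<phi> x))" unfolding \<mu>_def c_def by simp
    then show ?thesis using P\<phi> by simp
  qed
  interpret P\<mu>: product_prob_space \<mu>
    by (simp add: product_prob_space_def product_sigma_finite_def product_prob_space_axioms_def
        \<mu>prob prob_space_imp_sigma_finite)
  have s\<mu>: "sets (\<mu> j) = sets lborel" for j unfolding \<mu>_def by simp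
  have nm: "n \<in> borel_measurable L"
    unfolding n_def L_def
  proof (intro borel_measurable_prod_ennreal)
    fix j assume j: "j \<in> {..<d}"
    show "(\<lambda>x. c j (x j)) \<in> borel_measurable (PiM {..<d} (\<lambda>_. lborel))"
      using measurable_compose[OF measurable_component_singleton[OF j] cml] by simp
  qed
  have densPi: "density L n = PiM {..<d} \<mu>"
  proof (rule P\<mu>.PiM_eqI)
    show "finite {..<d}" by simp
    show "sets (density L n) = sets (PiM {..<d} \<mu>)"
      unfolding L_def sets_density by (intro sets_PiM_cong) (auto simp: s\<mu>)
  next
    fix A assume A: "\<And>i. i \<in> {..<d} \<Longrightarrow> A i \<in> sets (\<mu> i)"
    have Al: "A i \<in> sets lborel" if "i < d" for i using A[of i] that s\<mu> by simp
    have PA: "PiE {..<d} A \<in> sets L" unfolding L_def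
      by (rule sets_PiM_I_finite) (use Al in auto)
    have "emeasure (density L n) (PiE {..<d} A) = (\<integral>\<^sup>+x. n x * indicator (PiE {..<d} A) x \<partial>L)"
      by (rule emeasure_density[OF nm PA])
    also have "\<dots> = (\<integral>\<^sup>+x. (\<Prod>j<d. c j (x j) * indicator (A j) (x j)) \<partial>L)"
    proof (rule nn_integral_cong)
      fix x assume x: "x \<in> space L"
      have "indicator (PiE {..<d} A) x = (\<Prod>j<d. indicator (A j) (x j) :: ennreal)"
      proof (cases "\<forall>j<d. x j \<in> A j")
        case True
        then have "x \<in> PiE {..<d} A" using x unfolding spL by (auto simp: PiE_iff)
        then show ?thesis using True by simp
      next
        case False
        then obtain j where j: "j < d" "x j \<notin> A j" by blast
        then have "x \<notin> PiE {..<d} A" by (auto simp: PiE_iff)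
        moreover have "(\<Prod>j<d. indicator (A j) (x j) :: ennreal) = 0"
          using j by (subst ennreal_prod_eq_0) (auto intro!: bexI[of _ j])
        ultimately show ?thesis by simp
      qed
      then show "n x * indicator (PiE {..<d} A) x = (\<Prod>j<d. c j (x j) * indicator (A j) (x j))"
        unfolding n_def by (simp add: prod.distrib)
    qed
    also have "\<dots> = (\<Prod>j<d. \<integral>\<^sup>+y. c j y * indicator (A j) y \<partial>lborel)"
      unfolding L_def
    proof (rule Lp.product_nn_integral_prod)
      fix j assume j: "j \<in> {..<d}"
      have "A j \<in> sets borel" using Al[of j] j by simp
      then show "(\<lambda>y. c j y * indicator (A j) y) \<in> borel_measurable lborel"
        using cm[of j] by simp
    qed simp
    also have "\<dots> = (\<Prod>j<d. emeasure (\<mu> j) (A j))"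
    proof (rule prod.cong)
      fix j assume j: "j \<in> {..<d}"
      show "(\<integral>\<^sup>+y. c j y * indicator (A j) y \<partial>lborel) = emeasure (\<mu> j) (A j)"
        unfolding \<mu>_def using Al[of j] j cml[of j] by (subst emeasure_density) auto
    qed simp
    finally show "emeasure (density L n) (PiE {..<d} A) = (\<Prod>j<d. emeasure (\<mu> j) (A j))" .
  qed
  have rm: "r \<in> borel_measurable L" unfolding r_def
    by (rule borel_measurable_divide_ennreal[OF nm pm])
  have nK: "x \<in> K" if x: "x \<in> space L" and nx: "n x \<noteq> 0" for x
  proof -
    have "\<forall>j<d. c j (x j) \<noteq> 0" using nx unfolding n_def by simp
    then have "\<forall>j<d. x j \<in> C j" unfolding c_def by (auto simp: indicator_def split: if_splits)
    moreover have "x \<in> extensional {..<d}" using x unfolding spL by (simp add: PiE_def)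
    ultimately show ?thesis unfolding K_def by (auto simp: PiE_iff)
  qed
  have npos: "n x \<noteq> 0" if x: "x \<in> K" for x
  proof -
    have "c j (x j) \<noteq> 0" if j: "j < d" for j
    proof -
      have "x j \<in> C j" using x j unfolding K_def by auto
      then show ?thesis unfolding c_def using j \<phi>pos[of "x j"] Ztop[of j]
        by (simp add: ennreal_eq_0_iff not_le)
    qed
    then show ?thesis unfolding n_def by simp
  qed
  have dM': "distr M' L xv = density L n"
  proof -
    have "distr M' L xv = density (distr M L xv) r"
      unfolding M'_def by (rule density_distr[OF rm xvm, symmetric])
    also have "\<dots> = density (density L p) r" unfolding dist ..
    also have "\<dots> = density L (\<lambda>x. p x * r x)" by (rule density_density_eq[OF pm rm])
    also have "\<dots> = density L n"
    proof (rule density_cong)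
      show "(\<lambda>x. p x * r x) \<in> borel_measurable L" by (rule borel_measurable_times_ennreal[OF pm rm])
      show "n \<in> borel_measurable L" by (rule nm)
      show "AE x in L. p x * r x = n x" using pfin AE_space
      proof eventually_elim
        case (elim x)
        show ?case
        proof (cases "n x = 0")
          case True then show ?thesis unfolding r_def by simp
        next
          case False
          then have "x \<in> K" using nK elim by blast
          then have "p x > 0" using pos unfolding K_def C_def by blast
          then have "p x \<noteq> 0" by simp
          then show ?thesis unfolding r_def using elim(1)
            by (simp add: ennreal_times_divide mult.commute[of "p x"] ennreal_mult_divide_eq)
        qed
      qed
    qed
    finally show ?thesis .
  qed
  have sM': "sets M' = sets M" and spM': "space M' = space M" unfolding M'_def by simp_all
  have xvm': "xv \<in> measurable M' L" by (subst measurable_cong_sets[OF sM' refl]) (rule xvm)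
  have PPi: "prob_space (PiM {..<d} \<mu>)" by (rule prob_space_PiM) (rule \<mu>prob)
  have PM': "prob_space M'"
  proof (rule prob_spaceI)
    have "emeasure M' (space M') = emeasure (distr M' L xv) (space L)"
      using xvm' by (subst emeasure_distr) (auto simp: measurable_space Int_absorb1 subset_eq)
    also have "\<dots> = emeasure (PiM {..<d} \<mu>) (space (PiM {..<d} \<mu>))"
      unfolding dM' densPi[symmetric] by simp
    also have "\<dots> = 1" by (rule prob_space.emeasure_space_1[OF PPi])
    finally show "emeasure M' (space M') = 1" .
  qed
  have wm: "(\<lambda>\<omega>. r (xv \<omega>)) \<in> borel_measurable M" by (rule measurable_compose[OF xvm rm])
  have wpos: "AE \<omega> in M. 0 < r (xv \<omega>)" using AEK pfinM
  proof eventually_elim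
    case (elim \<omega>)
    then have "n (xv \<omega>) \<noteq> 0" using npos by blast
    then show ?case using elim(2) unfolding r_def by (simp add: zero_less_iff_neq_zero)
  qed
  have AE12: "\<forall>P. (AE x in M. P x) \<longrightarrow> (AE x in M'. P x)"
  proof (intro allI impI)
    fix P assume "AE x in M. P x"
    then show "AE x in M'. P x" unfolding M'_def AE_density[OF wm] by eventually_elim simp
  qed
  have AE21: "\<forall>P. (AE x in M'. P x) \<longrightarrow> (AE x in M. P x)"
  proof (intro allI impI)
    fix P assume "AE x in M'. P x"
    then have "AE x in M. 0 < r (xv x) \<longrightarrow> P x" unfolding M'_def AE_density[OF wm] .
    with wpos show "AE x in M. P x" by eventually_elim simp
  qed
  have ind: "prob_space.indep_vars M' (\<lambda>_. lborel) X {..<d}"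
  proof -
    have rv: "X i \<in> measurable M' lborel" if "i \<in> {..<d}" for i
      by (subst measurable_cong_sets[OF sM' refl]) (use Xm[of i] that in simp)
    have xveq: "(\<lambda>x. \<lambda>i\<in>{..<d}. X i x) = xv" unfolding xv_def feat_vec_def by simp
    have marg: "distr M' lborel (X i) = \<mu> i" if i: "i \<in> {..<d}" for i
    proof -
      have ci: "(\<lambda>x. x i) \<in> measurable L lborel" unfolding L_def by (rule measurable_component_singleton[OF i])
      have "distr M' lborel (X i) = distr M' lborel ((\<lambda>x. x i) \<circ> xv)"
        using i by (intro distr_cong) (auto simp: xv_def feat_vec_def)
      also have "\<dots> = distr (distr M' L xv) lborel (\<lambda>x. x i)"
        by (rule distr_distr[OF ci xvm', symmetric])
      also have "\<dots> = distr (PiM {..<d} \<mu>) lborel (\<lambda>x. x i)" unfolding dM' densPi ..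
      also have "\<dots> = distr (PiM {..<d} \<mu>) (\<mu> i) (\<lambda>x. x i)"
        by (rule distr_cong) (auto simp: s\<mu>)
      also have "\<dots> = \<mu> i" by (rule distr_PiM_component[OF \<mu>prob i])
      finally show ?thesis .
    qed
    have "distr M' (PiM {..<d} (\<lambda>_. lborel)) (\<lambda>x. \<lambda>i\<in>{..<d}. X i x) = PiM {..<d} (\<lambda>i. distr M' lborel (X i))"
    proof -
      have "distr M' (PiM {..<d} (\<lambda>_. lborel)) (\<lambda>x. \<lambda>i\<in>{..<d}. X i x) = PiM {..<d} \<mu>"
        unfolding xveq L_def[symmetric] dM' densPi ..
      also have "\<dots> = PiM {..<d} (\<lambda>i. distr M' lborel (X i))"
        by (rule PiM_cong) (simp_all add: marg)
      finally show ?thesis .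
    qed
    then show ?thesis
      using prob_space.indep_vars_iff_distr_eq_PiM'[OF PM', where I="{..<d}" and X=X and M'="\<lambda>_. lborel"] d0 rv by auto
  qed
  show ?thesis using PM' sM' spM' AE12 AE21 ind by blast
qed

lemma fs_space_eq: "space M' = space M \<Longrightarrow> feat_sigma M' X S = feat_sigma M X S"
  unfolding feat_sigma_def by simp

lemma sub_transfer: "subalgebra M F \<Longrightarrow> sets M' = sets M \<Longrightarrow> space M' = space M \<Longrightarrow> subalgebra M' F"
  unfolding subalgebra_def by simp

lemma squash_inv: "((x::real) / (1 + \<bar>x\<bar>)) / (1 - \<bar>x / (1 + \<bar>x\<bar>)\<bar>) = x"
proof -
  have p: "1 + \<bar>x\<bar> > 0" by simp
  have a: "\<bar>x / (1 + \<bar>x\<bar>)\<bar> = \<bar>x\<bar> / (1 + \<bar>x\<bar>)" using p by simp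
  have e: "1 - \<bar>x\<bar> / (1 + \<bar>x\<bar>) = 1 / (1 + \<bar>x\<bar>)" using p by (simp add: diff_divide_distrib[symmetric] divide_simps)
  show ?thesis unfolding a e using p by simp
qed

lemma fs_gen_split:
  assumes TAC: "T = A \<union> C"
  shows "sets (feat_sigma M X T) =
    sigma_sets (space M) {a \<inter> c | a c. a \<in> sets (feat_sigma M X A) \<and> c \<in> sets (feat_sigma M X C)}"
  unfolding fs_sets
proof (rule sigma_sets_eqI)
  let ?E = "{a \<inter> c | a c. a \<in> sigma_sets (space M) (fgen M X A) \<and> c \<in> sigma_sets (space M) (fgen M X C)}"
  fix b assume "b \<in> fgen M X T"
  then obtain j B where b: "b = X j -` B \<inter> space M" "j \<in> T" "B \<in> sets borel"
    unfolding fgen_def by blast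
  have bs: "b \<inter> space M = b" "space M \<inter> b = b" using b by auto
  have top: "space M \<in> sigma_sets (space M) (fgen M X A)" "space M \<in> sigma_sets (space M) (fgen M X C)"
    by (rule sigma_sets_top)+
  show "b \<in> sigma_sets (space M) ?E"
  proof (cases "j \<in> A")
    case True
    then have "b \<in> fgen M X A" using b unfolding fgen_def by blast
    then have "b \<in> sigma_sets (space M) (fgen M X A)" by (rule sigma_sets.Basic)
    then have "b \<inter> space M \<in> ?E" using top(2) by blast
    then have "b \<in> ?E" by (simp only: bs)
    then show ?thesis by (rule sigma_sets.Basic)
  next
    case False
    then have "j \<in> C" using b TAC by blast
    then have "b \<in> fgen M X C" using b unfolding fgen_def by blast
    then have "b \<in> sigma_sets (space M) (fgen M X C)" by (rule sigma_sets.Basic)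
    then have "space M \<inter> b \<in> ?E" using top(1) by blast
    then have "b \<in> ?E" by (simp only: bs)
    then show ?thesis by (rule sigma_sets.Basic)
  qed
next
  fix b assume "b \<in> {a \<inter> c | a c. a \<in> sigma_sets (space M) (fgen M X A) \<and> c \<in> sigma_sets (space M) (fgen M X C)}"
  then obtain a c where b: "b = a \<inter> c" "a \<in> sigma_sets (space M) (fgen M X A)" "c \<in> sigma_sets (space M) (fgen M X C)"
    by blast
  have "fgen M X A \<subseteq> fgen M X T" unfolding fgen_def using TAC by blast
  then have s1: "sigma_sets (space M) (fgen M X A) \<subseteq> sigma_sets (space M) (fgen M X T)"
    by (rule sigma_sets_mono')
  have "fgen M X C \<subseteq> fgen M X T" unfolding fgen_def using TAC by blast
  then have s2: "sigma_sets (space M) (fgen M X C) \<subseteq> sigma_sets (space M) (fgen M X T)"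
    by (rule sigma_sets_mono')
  have ac: "a \<in> sigma_sets (space M) (fgen M X T)" "c \<in> sigma_sets (space M) (fgen M X T)"
    using b s1 s2 by blast+
  interpret SA: sigma_algebra "space M" "sigma_sets (space M) (fgen M X T)"
    by (rule sigma_algebra_sigma_sets[OF fgen_Pow])
  show "b \<in> sigma_sets (space M) (fgen M X T)" unfolding b(1) by (rule SA.Int[OF ac])
qed

lemma squash_bnd: "\<bar>z / (1 + \<bar>z\<bar>)\<bar> \<le> (1::real)"
proof -
  have p: "1 + \<bar>z\<bar> > 0" by simp
  have "\<bar>z / (1 + \<bar>z\<bar>)\<bar> = \<bar>z\<bar> / (1 + \<bar>z\<bar>)" using p by simp
  also have "\<dots> \<le> 1" using p by (simp add: divide_le_eq_1)
  finally show ?thesis .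
qed

lemma stable_inter_core:
  assumes P: "prob_space M" and Xm: "\<And>j. j < d \<Longrightarrow> X j \<in> borel_measurable M"
    and Yi: "integrable M Y"
    and M': "prob_space M'" and sM': "sets M' = sets M" and spM': "space M' = space M"
    and AE12: "\<And>P. (AE x in M. P x) \<Longrightarrow> (AE x in M'. P x)"
    and AE21: "\<And>P. (AE x in M'. P x) \<Longrightarrow> (AE x in M. P x)"
    and ind: "prob_space.indep_vars M' (\<lambda>_. lborel) X {..<d}"
    and stS: "stable_set M d X Y S" and stT: "stable_set M d X Y T"
  shows "stable_set M d X Y (S \<inter> T)"
proof -
  define A where "A = S \<inter> T"
  define C where "C = T - S"
  have Sd: "S \<subseteq> {..<d}" and Td: "T \<subseteq> {..<d}" using stS stT unfolding stable_set_def by auto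
  have Ad: "A \<subseteq> {..<d}" and Cd: "C \<subseteq> {..<d}" using Sd Td unfolding A_def C_def by blast+
  have TAC: "T = A \<union> C" unfolding A_def C_def by blast
  have SC1: "S \<union> C \<subseteq> {..<d}" using Sd Td unfolding C_def by blast
  have SC2: "S \<inter> C = {}" unfolding C_def by blast
  let ?FS = "feat_sigma M X S" and ?FT = "feat_sigma M X T" and ?FA = "feat_sigma M X A"
    and ?FC = "feat_sigma M X C" and ?FF = "feat_sigma M X {..<d}"
  have subS: "subalgebra M ?FS" using Sd Xm by (intro fs_sub) auto
  have subT: "subalgebra M ?FT" using Td Xm by (intro fs_sub) auto
  have subA: "subalgebra M ?FA" using Ad Xm by (intro fs_sub) auto
  have subC: "subalgebra M ?FC" using Cd Xm by (intro fs_sub) auto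
  have subF: "subalgebra M ?FF" using Xm by (intro fs_sub) auto
  have SA: "subalgebra ?FS ?FA" unfolding A_def by (rule fs_mono) blast
  interpret S: sigma_finite_subalgebra M ?FS using P subS by (rule prob_sub)
  interpret T: sigma_finite_subalgebra M ?FT using P subT by (rule prob_sub)
  interpret A: sigma_finite_subalgebra M ?FA using P subA by (rule prob_sub)
  interpret F: sigma_finite_subalgebra M ?FF using P subF by (rule prob_sub)
  interpret M': prob_space M' by fact
  let ?gS = "real_cond_exp M ?FS Y" and ?gT = "real_cond_exp M ?FT Y" and ?f = "real_cond_exp M ?FF Y"
  have gST: "AE x in M. ?gS x = ?gT x" using stS stT unfolding stable_set_def by auto
  have gSm: "?gS \<in> borel_measurable ?FS" by (rule borel_measurable_cond_exp)
  have gTm: "?gT \<in> borel_measurable ?FT" by (rule borel_measurable_cond_exp)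
  define u where "u x = ?gS x / (1 + \<bar>?gS x\<bar>)" for x
  define v where "v x = ?gT x / (1 + \<bar>?gT x\<bar>)" for x
  have uS: "u \<in> borel_measurable ?FS" unfolding u_def
    by (intro borel_measurable_divide borel_measurable_add borel_measurable_const borel_measurable_abs gSm)
  have vT: "v \<in> borel_measurable ?FT" unfolding v_def
    by (intro borel_measurable_divide borel_measurable_add borel_measurable_const borel_measurable_abs gTm)
  have sS': "subalgebra M' ?FS" by (rule sub_transfer[OF subS sM' spM'])
  have sT': "subalgebra M' ?FT" by (rule sub_transfer[OF subT sM' spM'])
  have sA': "subalgebra M' ?FA" by (rule sub_transfer[OF subA sM' spM'])
  have sC': "subalgebra M' ?FC" by (rule sub_transfer[OF subC sM' spM'])
  have uM': "u \<in> borel_measurable M'" by (rule measurable_from_subalg[OF sS' uS])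
  have vM': "v \<in> borel_measurable M'" by (rule measurable_from_subalg[OF sT' vT])
  have ub: "AE x in M'. norm (u x) \<le> 1" by (intro AE_I2) (simp only: real_norm_def u_def squash_bnd)
  have vb: "AE x in M'. norm (v x) \<le> 1" by (intro AE_I2) (simp only: real_norm_def v_def squash_bnd)
  have ui: "integrable M' u" by (rule M'.integrable_const_bound[OF ub uM'])
  have vi: "integrable M' v" by (rule M'.integrable_const_bound[OF vb vM'])
  have uv: "AE x in M'. u x = v x" using AE12[OF gST] by eventually_elim (simp only: u_def v_def)
  interpret T': sigma_finite_subalgebra M' ?FT using M' sT' by (rule prob_sub)
  interpret A': sigma_finite_subalgebra M' ?FA using M' sA' by (rule prob_sub)
  have eqS: "feat_sigma M' X S = ?FS" by (rule fs_space_eq[OF spM'])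
  have eqC: "feat_sigma M' X C = ?FC" by (rule fs_space_eq[OF spM'])
  have ind': "prob_space.indep_set M' (sets ?FS) (sets ?FC)"
    using fs_indep[OF M' ind SC1 SC2] unfolding eqS eqC .
  have gen: "sets ?FT = sigma_sets (space M') {a \<inter> c | a c. a \<in> sets ?FA \<and> c \<in> sets ?FC}"
    unfolding spM' by (rule fs_gen_split[OF TAC])
  have e1: "AE x in M'. real_cond_exp M' ?FT u x = real_cond_exp M' ?FA u x"
    by (rule cond_exp_indep[OF M' sS' sC' sA' sT' SA ind' gen uS ui])
  have e2: "AE x in M'. real_cond_exp M' ?FT u x = real_cond_exp M' ?FT v x"
    by (rule T'.real_cond_exp_cong[OF uv uM' vM'])
  have e3: "AE x in M'. real_cond_exp M' ?FT v x = v x"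
    by (rule T'.real_cond_exp_F_meas[OF vi vT])
  define k where "k = real_cond_exp M' ?FA u"
  have kA: "k \<in> borel_measurable ?FA" unfolding k_def by (rule borel_measurable_cond_exp)
  have uk': "AE x in M'. u x = k x" using e1 e2 e3 uv unfolding k_def by eventually_elim metis
  have uk: "AE x in M. u x = k x" by (rule AE21[OF uk'])
  define h where "h x = k x / (1 - \<bar>k x\<bar>)" for x
  have hA: "h \<in> borel_measurable ?FA" unfolding h_def
    by (intro borel_measurable_divide borel_measurable_diff borel_measurable_const borel_measurable_abs kA)
  have hM: "h \<in> borel_measurable M" by (rule measurable_from_subalg[OF subA hA])
  have gh: "AE x in M. ?gS x = h x"
    using uk by eventually_elim (metis h_def u_def squash_inv)
  have gSM: "?gS \<in> borel_measurable M" by (rule measurable_from_subalg[OF subS gSm])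
  have gSi: "integrable M ?gS" by (rule S.real_cond_exp_int(1)[OF Yi])
  have hi: "integrable M h" using integrable_cong_AE[OF gSM hM gh] gSi by blast
  have f1: "AE x in M. real_cond_exp M ?FA ?gS x = real_cond_exp M ?FA Y x"
    by (rule A.real_cond_exp_nested_subalg[OF subS SA Yi])
  have f2: "AE x in M. real_cond_exp M ?FA ?gS x = real_cond_exp M ?FA h x"
    by (rule A.real_cond_exp_cong[OF gh gSM hM])
  have f3: "AE x in M. real_cond_exp M ?FA h x = h x"
    by (rule A.real_cond_exp_F_meas[OF hi hA])
  have f4: "AE x in M. ?gS x = ?f x" using stS unfolding stable_set_def by blast
  have "AE x in M. real_cond_exp M ?FA Y x = ?f x"
    using f1 f2 f3 f4 gh by eventually_elim metis
  then have "stable_set M d X Y A" unfolding stable_set_def using Ad by blast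
  then show ?thesis unfolding A_def .
qed

lemma main_from_inter:
  assumes P: "prob_space M" and Xm: "\<And>j. j < d \<Longrightarrow> X j \<in> borel_measurable M"
    and Yi: "integrable M Y"
    and inter: "\<And>S T. stable_set M d X Y S \<Longrightarrow> stable_set M d X Y T \<Longrightarrow> stable_set M d X Y (S \<inter> T)"
  shows "(\<exists>!D. minimal_stable_set M d X Y D) \<and>
         (\<forall>D. minimal_stable_set M d X Y D \<longrightarrow>
             {S. stable_set M d X Y S} = {S. S \<subseteq> {..<d} \<and> D \<subseteq> S})"
proof -
  let ?P = "{S. stable_set M d X Y S}"
  have fin: "finite ?P"
    by (rule finite_subset[of _ "Pow {..<d}"]) (auto simp: stable_set_def)
  have ne: "{..<d} \<in> ?P" by (simp add: stable_set_def)
  have minsub: "D \<subseteq> S" if "minimal_stable_set M d X Y D" "stable_set M d X Y S" for D S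
  proof -
    have "stable_set M d X Y (S \<inter> D)" using inter that unfolding minimal_stable_set_def by blast
    then have "\<not> (S \<inter> D \<subset> D)" using that unfolding minimal_stable_set_def by blast
    then show ?thesis by blast
  qed
  obtain D where D: "D \<in> ?P" "\<And>T. T \<in> ?P \<Longrightarrow> T \<subseteq> D \<Longrightarrow> T = D"
    using finite_has_minimal[OF fin] ne by blast
  have Dmin: "minimal_stable_set M d X Y D"
    unfolding minimal_stable_set_def using D by blast
  have ex1: "\<exists>!D. minimal_stable_set M d X Y D"
  proof (rule ex1I[of _ D])
    fix D' assume "minimal_stable_set M d X Y D'"
    then show "D' = D" using minsub[OF Dmin] minsub[of D'] Dmin
      unfolding minimal_stable_set_def by blast
  qed (rule Dmin)
  show ?thesis
  proof (intro conjI allI impI ex1)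
    fix D' assume D': "minimal_stable_set M d X Y D'"
    show "{S. stable_set M d X Y S} = {S. S \<subseteq> {..<d} \<and> D' \<subseteq> S}"
    proof (intro set_eqI iffI)
      fix S assume "S \<in> {S. stable_set M d X Y S}"
      then show "S \<in> {S. S \<subseteq> {..<d} \<and> D' \<subseteq> S}" using minsub[OF D'] by (auto simp: stable_set_def)
    next
      fix S assume "S \<in> {S. S \<subseteq> {..<d} \<and> D' \<subseteq> S}"
      then show "S \<in> {S. stable_set M d X Y S}"
        using stable_up[OF P Xm Yi, where D=D' and S=S] D' unfolding minimal_stable_set_def by auto
    qed
  qed
qed

theorem theorem4:
  fixes M :: "'a measure" and d :: nat
    and X :: "nat \<Rightarrow> 'a \<Rightarrow> real" and Y :: "'a \<Rightarrow> real"
    and q :: "(nat \<Rightarrow> real) \<times> real \<Rightarrow> ennreal"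
    and p :: "(nat \<Rightarrow> real) \<Rightarrow> ennreal"
  assumes "prob_space M"
    and "\<And>j. j < d \<Longrightarrow> X j \<in> borel_measurable M"
    and "Y \<in> borel_measurable M"
    and "integrable M Y"
    and joint_density: "distributed M (PiM {..<d} (\<lambda>_. lborel) \<Otimes>\<^sub>M lborel)
                          (\<lambda>\<omega>. (feat_vec d X \<omega>, Y \<omega>)) q"
    and X_density: "distributed M (PiM {..<d} (\<lambda>_. lborel)) (feat_vec d X) p"
    and positivity: "\<forall>x \<in> (\<Pi>\<^sub>E j\<in>{..<d}. rv_support M (X j)). p x > 0"
  shows "(\<exists>!D. minimal_stable_set M d X Y D) \<and>
         (\<forall>D. minimal_stable_set M d X Y D \<longrightarrow>
             {S. stable_set M d X Y S} = {S. S \<subseteq> {..<d} \<and> D \<subseteq> S})"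
proof -
  have inter: "stable_set M d X Y (S \<inter> T)"
    if stS: "stable_set M d X Y S" and stT: "stable_set M d X Y T" for S T
  proof (cases "d = 0")
    case True
    then have "S = {}" "T = {}" using stS stT unfolding stable_set_def by auto
    then show ?thesis using stS by simp
  next
    case False
    then have d0: "d > 0" by simp
    obtain M' where M': "prob_space M'" "sets M' = sets M" "space M' = space M"
      "\<forall>P. (AE x in M. P x) \<longrightarrow> (AE x in M'. P x)" "\<forall>P. (AE x in M'. P x) \<longrightarrow> (AE x in M. P x)"
      "prob_space.indep_vars M' (\<lambda>_. lborel) X {..<d}"
      using change_measure[OF assms(1) assms(2) X_density positivity d0] by blast
    show ?thesis
      by (rule stable_inter_core[OF assms(1) assms(2) assms(4) M'(1) M'(2) M'(3) _ _ M'(6) stS stT])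
         (use M'(4,5) in blast)+
  qed
  show ?thesis by (rule main_from_inter[OF assms(1) assms(2) assms(4) inter])
qed

end
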